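(* Suppose the stochastic variational inequality in extensive form has at least one solution, and let $\{(x_k,w_k)\}$ be an infinite sequence generated by the IPHA (the stopping condition never holds). Then $\{(x_k,w_k)\}$ converges to a pair $(x^*,w^* )$ which solves the SVI in extensive form, and $x^*$ is a solution of the basic SVI.
   Context: Multistage setting: $\Xi$ is a finite set of scenarios $\xi=(\xi_1,\dots,\xi_N)$ with probabilities $p(\xi)>0$; $n=n_1+\dots+n_N$. $\mathcal L_n$ is the space of functions $x:\Xi\to\mathbb R^n$, $x(\xi)=(x_1(\xi),\dots,x_N(\xi))$, $x_j(\xi)\in\mathbb R^{n_j}$, with inner product $\langle x,w\rangle=\sum_{\xi}p(\xi)\sum_{j}\langle x_j(\xi),w_j(\xi)\rangle$. $\mathcal N=\{x\in\mathcal L_n: x_j(\xi)\text{ does not depend on }\xi_j,\dots,\xi_N\}$, $\mathcal M=\mathcal N^\perp$, with orthogonal projections $P_{\mathcal N},P_{\mathcal M}$. For each $\xi$, $C(\xi)\subset\mathbb R^n$ is nonempty closed convex and $F(\cdot,\xi):\mathbb R^n\to\mathbb R^n$ is continuous monotone; $\mathcal C=\{x\in\mathcal L_n: x(\xi)\in C(\xi)\ \forall\xi\}$ and $\mathcal F(x)(\xi)=F(x(\xi),\xi)$. $r>0$ fixed. Basic SVI: find $x\in\mathcal C\cap\mathcal N$ with $-\mathcal F(x)\in N_{\mathcal C\cap\mathcal N}(x)$. SVI in extensive form: find $x\in\mathcal N$, $w\in\mathcal M$ with $-F(x(\xi),\xi)-w(\xi)\in N_{C(\xi)}(x(\xi))$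 for all $\xi\in\Xi$. IPHA: choose $x_0\in\mathcal N$, $w_0\in\mathcal M$, $\bar\sigma\in(0,1)$, $\theta\in(0,1)$. At iteration $k$: choose $\sigma_k\in[0,\bar\sigma)$, find $\hat x^k,\hat w^k\in\mathcal L_n$ with $r(x_k(\xi)-\hat x^k(\xi))-w_k(\xi)\in F(\hat w^k(\xi),\xi)+N_{C(\xi)}(\hat w^k(\xi))$ for all $\xi$, $\delta^k=\hat w^k-\hat x^k$, and $\|\delta^k\|^2\le\sigma_k^2(\|a_k\|^2+\|b_k\|^2)$, where $a_k=x_k-P_{\mathcal N}(\hat x^k)+P_{\mathcal M}(\hat w^k)$, $b_k=x_k-P_{\mathcal N}(\hat w^k)+P_{\mathcal M}(\hat x^k)$. If $b_k=0$ stop; otherwise choose $\tau_k\in[1-\theta,1+\theta]$, set $\alpha_k=\langle a_k,b_k\rangle/\|a_k\|^2$, $x_{k+1}=x_k-\tau_k\alpha_k(x_k-P_{\mathcal N}(\hat x^k))$, $w_{k+1}=w_k+\tau_k\alpha_k rP_{\mathcal M}(\hat w^k)$. *)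

theory Defs
  imports "HOL-Analysis.Analysis"
begin

text \<open>Scenarios are functions xi :: nat => 's, with xi t the t-th component (t = 1..N).
  A decision x(xi) is a vector in real^'n; the coordinates of real^'n are partitioned
  into the stage blocks by blk :: 'n => nat (values in 1..N), so that x_j(xi) consists
  of the coordinates i with blk i = j.\<close>

definition normal_cone :: "(real^'n) set \<Rightarrow> real^'n \<Rightarrow> (real^'n) set" where
  "normal_cone S u = {v. u \<in> S \<and> (\<forall>y\<in>S. v \<bullet> (y - u) \<le> 0)}"

definition ipL :: "('s set) \<Rightarrow> ('s \<Rightarrow> real) \<Rightarrow> ('s \<Rightarrow> real^'n) \<Rightarrow> ('s \<Rightarrow> real^'n) \<Rightarrow> real" where
  "ipL Xi p x w = (\<Sum>\<xi>\<in>Xi. p \<xi> * (x \<xi> \<bullet> w \<xi>))"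

definition Ln :: "'s set \<Rightarrow> ('s \<Rightarrow> real^'n) set" where
  "Ln Xi = {x. \<forall>\<xi>. \<xi> \<notin> Xi \<longrightarrow> x \<xi> = 0}"

definition NA :: "(nat \<Rightarrow> 'c) set \<Rightarrow> ('n \<Rightarrow> nat) \<Rightarrow> ((nat \<Rightarrow> 'c) \<Rightarrow> real^'n) set" where
  "NA Xi blk = {x \<in> Ln Xi. \<forall>\<xi>\<in>Xi. \<forall>\<xi>'\<in>Xi. \<forall>i.
       (\<forall>t\<in>{1..<blk i}. \<xi> t = \<xi>' t) \<longrightarrow> x \<xi> $ i = x \<xi>' $ i}"

definition MA :: "(nat \<Rightarrow> 'c) set \<Rightarrow> ((nat \<Rightarrow> 'c) \<Rightarrow> real) \<Rightarrow> ('n \<Rightarrow> nat) \<Rightarrow> ((nat \<Rightarrow> 'c) \<Rightarrow> real^'n) set" where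
  "MA Xi p blk = {w \<in> Ln Xi. \<forall>x\<in>NA Xi blk. ipL Xi p x w = 0}"

definition normal_coneL :: "'s set \<Rightarrow> ('s \<Rightarrow> real) \<Rightarrow> ('s \<Rightarrow> real^'n) set \<Rightarrow> ('s \<Rightarrow> real^'n) \<Rightarrow> ('s \<Rightarrow> real^'n) set" where
  "normal_coneL Xi p S u = {v. u \<in> S \<and> (\<forall>y\<in>S. ipL Xi p v (\<lambda>\<xi>. y \<xi> - u \<xi>) \<le> 0)}"

definition oprojL :: "'s set \<Rightarrow> ('s \<Rightarrow> real) \<Rightarrow> ('s \<Rightarrow> real^'n) set \<Rightarrow> ('s \<Rightarrow> real^'n) \<Rightarrow> ('s \<Rightarrow> real^'n)" where
  "oprojL Xi p S x = (THE y. y \<in> S \<and> (\<forall>z\<in>S. ipL Xi p (\<lambda>\<xi>. x \<xi> - y \<xi>) z = 0))"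

definition CC :: "'s set \<Rightarrow> ('s \<Rightarrow> (real^'n) set) \<Rightarrow> ('s \<Rightarrow> real^'n) set" where
  "CC Xi C = {x \<in> Ln Xi. \<forall>\<xi>\<in>Xi. x \<xi> \<in> C \<xi>}"

end

theory Submission
  imports Defs
begin

lemma ipL_commute: "ipL X p u v = ipL X p v u"
  unfolding ipL_def by (simp add: inner_commute)
lemma ipL_add_left: "ipL X p (\<lambda>\<xi>. u \<xi> + v \<xi>) z = ipL X p u z + ipL X p v z"
  unfolding ipL_def by (simp add: inner_add_left distrib_left sum.distrib)
lemma ipL_diff_left: "ipL X p (\<lambda>\<xi>. u \<xi> - v \<xi>) z = ipL X p u z - ipL X p v z"
  unfolding ipL_def by (simp add: inner_diff_left right_diff_distrib sum_subtractf)
lemma ipL_scale_left: "ipL X p (\<lambda>\<xi>. c *\<^sub>R u \<xi>) z = c * ipL X p u z"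
  unfolding ipL_def by (simp add: sum_distrib_left algebra_simps)
lemma ipL_neg_left: "ipL X p (\<lambda>\<xi>. - u \<xi>) z = - ipL X p u z"
  unfolding ipL_def by (simp add: sum_negf)
lemma ipL_add_right: "ipL X p z (\<lambda>\<xi>. u \<xi> + v \<xi>) = ipL X p z u + ipL X p z v"
  by (simp add: ipL_def inner_add_right distrib_left sum.distrib)
lemma ipL_diff_right: "ipL X p z (\<lambda>\<xi>. u \<xi> - v \<xi>) = ipL X p z u - ipL X p z v"
  by (simp add: ipL_def inner_diff_right right_diff_distrib sum_subtractf)
lemma ipL_scale_right: "ipL X p z (\<lambda>\<xi>. c *\<^sub>R u \<xi>) = c * ipL X p z u"
  by (simp add: ipL_def sum_distrib_left algebra_simps)
lemma ipL_neg_right: "ipL X p z (\<lambda>\<xi>. - u \<xi>) = - ipL X p z u"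
  by (simp add: ipL_def sum_negf)
lemma ipL_eta: "ipL X p (\<lambda>\<xi>. u \<xi>) z = ipL X p u z" "ipL X p z (\<lambda>\<xi>. u \<xi>) = ipL X p z u"
  by simp_all
lemmas ipL_lin = ipL_add_left ipL_diff_left ipL_scale_left ipL_neg_left
  ipL_add_right ipL_diff_right ipL_scale_right ipL_neg_right

lemma ipL_cong: "(\<And>\<xi>. \<xi> \<in> X \<Longrightarrow> u \<xi> = u' \<xi>) \<Longrightarrow> (\<And>\<xi>. \<xi> \<in> X \<Longrightarrow> v \<xi> = v' \<xi>)
   \<Longrightarrow> ipL X p u v = ipL X p u' v'"
  unfolding ipL_def by (rule sum.cong) auto

lemma ipL_nonneg: "\<forall>\<xi>\<in>X. p \<xi> > 0 \<Longrightarrow> ipL X p u u \<ge> 0"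
  unfolding ipL_def by (auto intro!: sum_nonneg)

lemma ipL_point: assumes "finite X" "\<forall>\<xi>\<in>X. p \<xi> > 0" "\<xi> \<in> X"
  shows "p \<xi> * (norm (u \<xi>))\<^sup>2 \<le> ipL X p u u"
proof -
  have "p \<xi> * (u \<xi> \<bullet> u \<xi>) \<le> ipL X p u u"
    unfolding ipL_def using assms
    by (intro member_le_sum) (auto)
  thus ?thesis by (simp add: power2_norm_eq_inner)
qed

lemma ipL_zero: assumes "finite X" "\<forall>\<xi>\<in>X. p \<xi> > 0" "ipL X p u u = 0" "\<xi> \<in> X"
  shows "u \<xi> = 0"
proof -
  have "p \<xi> * (norm (u \<xi>))\<^sup>2 \<le> 0" using ipL_point[OF assms(1,2,4), of u] assms(3) by simp
  moreover have "p \<xi> > 0" using assms by auto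
  ultimately have "(norm (u \<xi>))\<^sup>2 \<le> 0" by (simp add: mult_le_0_iff)
  thus ?thesis by simp
qed

lemma ipL_zero_left: "(\<And>\<xi>. \<xi> \<in> X \<Longrightarrow> u \<xi> = 0) \<Longrightarrow> ipL X p u v = 0"
  unfolding ipL_def by simp

lemma condexp_orth:
  fixes g z p :: "(nat \<Rightarrow> 'a) \<Rightarrow> real" and T :: "nat set"
  assumes fin: "finite X" and pos: "\<forall>\<xi>\<in>X. p \<xi> > 0"
    and zc: "\<forall>\<xi>\<in>X. \<forall>\<xi>'\<in>X. (\<forall>t\<in>T. \<xi> t = \<xi>' t) \<longrightarrow> z \<xi> = z \<xi>'"
  shows "(\<Sum>\<xi>\<in>X. p \<xi> * ((\<Sum>\<xi>'\<in>{\<xi>'\<in>X. \<forall>t\<in>T. \<xi> t = \<xi>' t}. p \<xi>' * g \<xi>')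
                / (\<Sum>\<xi>'\<in>{\<xi>'\<in>X. \<forall>t\<in>T. \<xi> t = \<xi>' t}. p \<xi>')) * z \<xi>)
       = (\<Sum>\<xi>\<in>X. p \<xi> * g \<xi> * z \<xi>)"
proof -
  define R where "R \<xi> \<xi>' \<longleftrightarrow> (\<forall>t\<in>T. \<xi> t = \<xi>' t)" for \<xi> \<xi>' :: "nat \<Rightarrow> 'a"
  define P where "P \<xi> = (\<Sum>\<xi>'\<in>{\<xi>'\<in>X. R \<xi> \<xi>'}. p \<xi>')" for \<xi>
  have Rsym: "R a b = R b a" for a b unfolding R_def by auto
  have Rtr: "R a b \<Longrightarrow> R b c \<Longrightarrow> R a c" for a b c unfolding R_def by auto
  have Peq: "R a b \<Longrightarrow> P a = P b" for a b
    unfolding P_def by (rule sum.cong) (auto intro: Rtr simp: Rsym)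
  have Ppos: "\<xi> \<in> X \<Longrightarrow> P \<xi> > 0" for \<xi>
  proof -
    assume "\<xi> \<in> X"
    have "p \<xi> \<le> P \<xi>" unfolding P_def using fin pos \<open>\<xi>\<in>X\<close>
      by (intro member_le_sum) (auto simp: R_def less_imp_le)
    thus ?thesis using pos \<open>\<xi>\<in>X\<close> by force
  qed
  have e1: "p \<xi> * ((\<Sum>\<xi>'\<in>{\<xi>'\<in>X. R \<xi> \<xi>'}. p \<xi>' * g \<xi>') / P \<xi>) * z \<xi>
     = (\<Sum>\<xi>'\<in>X. if R \<xi> \<xi>' then p \<xi> * p \<xi>' * g \<xi>' * z \<xi> / P \<xi> else 0)" for \<xi>
  proof -
    have "(\<Sum>\<xi>'\<in>X. if R \<xi> \<xi>' then p \<xi> * p \<xi>' * g \<xi>' * z \<xi> / P \<xi> else 0)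
        = (p \<xi> * z \<xi> / P \<xi>) * (\<Sum>\<xi>'\<in>X. if R \<xi> \<xi>' then p \<xi>' * g \<xi>' else 0)"
      unfolding sum_distrib_left by (rule sum.cong) auto
    also have "(\<Sum>\<xi>'\<in>X. if R \<xi> \<xi>' then p \<xi>' * g \<xi>' else 0) = (\<Sum>\<xi>'\<in>{\<xi>'\<in>X. R \<xi> \<xi>'}. p \<xi>' * g \<xi>')"
      using fin by (simp add: sum.inter_filter)
    finally show ?thesis by simp
  qed
  have "(\<Sum>\<xi>\<in>X. p \<xi> * ((\<Sum>\<xi>'\<in>{\<xi>'\<in>X. R \<xi> \<xi>'}. p \<xi>' * g \<xi>') / P \<xi>) * z \<xi>)
     = (\<Sum>\<xi>\<in>X. \<Sum>\<xi>'\<in>X. if R \<xi> \<xi>' then p \<xi> * p \<xi>' * g \<xi>' * z \<xi> / P \<xi> else 0)"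
    using e1 by simp
  also have "\<dots> = (\<Sum>\<xi>'\<in>X. \<Sum>\<xi>\<in>X. if R \<xi> \<xi>' then p \<xi> * p \<xi>' * g \<xi>' * z \<xi> / P \<xi> else 0)"
    by (rule sum.swap)
  also have "\<dots> = (\<Sum>\<xi>'\<in>X. \<Sum>\<xi>\<in>X. if R \<xi>' \<xi> then p \<xi> * (p \<xi>' * g \<xi>' * z \<xi>' / P \<xi>') else 0)"
    apply (intro sum.cong refl)
    subgoal premises prems for \<xi>' \<xi>
    proof (cases "R \<xi> \<xi>'")
      case True
      then have "z \<xi> = z \<xi>'" "P \<xi> = P \<xi>'" "R \<xi>' \<xi>"
        using zc Peq[of \<xi> \<xi>'] Rsym prems unfolding R_def by blast+
      then show ?thesis using True by simp
    next
      case False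
      then show ?thesis by (simp add: Rsym)
    qed
    done
  also have "\<dots> = (\<Sum>\<xi>'\<in>X. P \<xi>' * (p \<xi>' * g \<xi>' * z \<xi>' / P \<xi>'))"
  proof (rule sum.cong[OF refl])
    fix \<xi>' assume "\<xi>' \<in> X"
    have "(\<Sum>\<xi>\<in>X. if R \<xi>' \<xi> then p \<xi> * (p \<xi>' * g \<xi>' * z \<xi>' / P \<xi>') else 0)
       = (\<Sum>\<xi>\<in>X. if R \<xi>' \<xi> then p \<xi> else 0) * (p \<xi>' * g \<xi>' * z \<xi>' / P \<xi>')"
      unfolding sum_distrib_right by (rule sum.cong) auto
    also have "(\<Sum>\<xi>\<in>X. if R \<xi>' \<xi> then p \<xi> else 0) = P \<xi>'"
      unfolding P_def using fin by (simp add: sum.inter_filter)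
    finally show "(\<Sum>\<xi>\<in>X. if R \<xi>' \<xi> then p \<xi> * (p \<xi>' * g \<xi>' * z \<xi>' / P \<xi>') else 0)
       = P \<xi>' * (p \<xi>' * g \<xi>' * z \<xi>' / P \<xi>')" .
  qed
  also have "\<dots> = (\<Sum>\<xi>'\<in>X. p \<xi>' * g \<xi>' * z \<xi>')"
    apply (rule sum.cong[OF refl]) subgoal for \<xi> using Ppos[of \<xi>] by simp done
  finally show ?thesis unfolding P_def R_def .
qed


definition CE :: "(nat \<Rightarrow> 'c) set \<Rightarrow> ((nat \<Rightarrow> 'c) \<Rightarrow> real) \<Rightarrow> ('n::finite \<Rightarrow> nat)
   \<Rightarrow> ((nat \<Rightarrow> 'c) \<Rightarrow> real^'n) \<Rightarrow> ((nat \<Rightarrow> 'c) \<Rightarrow> real^'n)" where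
  "CE Xi p blk y \<xi> = (if \<xi> \<in> Xi then (\<chi> i. (\<Sum>\<xi>'\<in>{\<xi>'\<in>Xi. \<forall>t\<in>{1..<blk i}. \<xi> t = \<xi>' t}. p \<xi>' * y \<xi>' $ i)
        / (\<Sum>\<xi>'\<in>{\<xi>'\<in>Xi. \<forall>t\<in>{1..<blk i}. \<xi> t = \<xi>' t}. p \<xi>')) else 0)"

lemma CE_NA: "CE Xi p blk y \<in> NA Xi blk"
proof -
  have "CE Xi p blk y \<xi> $ i = CE Xi p blk y \<xi>' $ i"
    if "\<xi> \<in> Xi" "\<xi>' \<in> Xi" "\<forall>t\<in>{1..<blk i}. \<xi> t = \<xi>' t" for \<xi> \<xi>' i
  proof -
    have "{\<eta>\<in>Xi. \<forall>t\<in>{1..<blk i}. \<xi> t = \<eta> t} = {\<eta>\<in>Xi. \<forall>t\<in>{1..<blk i}. \<xi>' t = \<eta> t}"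
      using that(3) by auto
    moreover have "CE Xi p blk y \<xi> $ i = (\<Sum>\<eta>\<in>{\<eta>\<in>Xi. \<forall>t\<in>{1..<blk i}. \<xi> t = \<eta> t}. p \<eta> * y \<eta> $ i)
        / (\<Sum>\<eta>\<in>{\<eta>\<in>Xi. \<forall>t\<in>{1..<blk i}. \<xi> t = \<eta> t}. p \<eta>)"
      using that(1) unfolding CE_def by simp
    moreover have "CE Xi p blk y \<xi>' $ i = (\<Sum>\<eta>\<in>{\<eta>\<in>Xi. \<forall>t\<in>{1..<blk i}. \<xi>' t = \<eta> t}. p \<eta> * y \<eta> $ i)
        / (\<Sum>\<eta>\<in>{\<eta>\<in>Xi. \<forall>t\<in>{1..<blk i}. \<xi>' t = \<eta> t}. p \<eta>)"
      using that(2) unfolding CE_def by simp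
    ultimately show ?thesis by simp
  qed
  note A = this
  have B: "CE Xi p blk y \<in> Ln Xi" unfolding Ln_def CE_def by simp
  show ?thesis unfolding NA_def
    apply (rule CollectI, rule conjI, rule B)
    apply (intro ballI allI impI)
    apply (rule A)
      apply assumption+
    done
qed

lemma ipL_vec: "ipL Xi p u z = (\<Sum>i\<in>UNIV. \<Sum>\<xi>\<in>Xi. p \<xi> * (u \<xi> $ i) * (z \<xi> $ i))"
proof -
  have "ipL Xi p u z = (\<Sum>\<xi>\<in>Xi. \<Sum>i\<in>UNIV. p \<xi> * (u \<xi> $ i) * (z \<xi> $ i))"
    unfolding ipL_def inner_vec_def by (simp add: sum_distrib_left mult.assoc)
  also have "\<dots> = (\<Sum>i\<in>UNIV. \<Sum>\<xi>\<in>Xi. p \<xi> * (u \<xi> $ i) * (z \<xi> $ i))"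
    by (rule sum.swap)
  finally show ?thesis .
qed

lemma NA_D: assumes "x \<in> NA Xi blk" "\<xi> \<in> Xi" "\<xi>' \<in> Xi" "\<forall>t\<in>{1..<blk i}. \<xi> t = \<xi>' t"
  shows "x \<xi> $ i = x \<xi>' $ i"
proof -
  have "\<forall>\<xi>\<in>Xi. \<forall>\<xi>'\<in>Xi. \<forall>i. (\<forall>t\<in>{1..<blk i}. \<xi> t = \<xi>' t) \<longrightarrow> x \<xi> $ i = x \<xi>' $ i"
    using assms(1) unfolding NA_def by (simp only: mem_Collect_eq) (erule conjunct2)
  from mp[OF spec[OF bspec[OF bspec[OF this assms(2)] assms(3)], of i] assms(4)] show ?thesis .
qed

lemma CE_nth: "\<xi> \<in> Xi \<Longrightarrow> CE Xi p blk y \<xi> $ i = (\<Sum>\<eta>\<in>{\<eta>\<in>Xi. \<forall>t\<in>{1..<blk i}. \<xi> t = \<eta> t}. p \<eta> * y \<eta> $ i)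
        / (\<Sum>\<eta>\<in>{\<eta>\<in>Xi. \<forall>t\<in>{1..<blk i}. \<xi> t = \<eta> t}. p \<eta>)"
  unfolding CE_def by simp

lemma CE_orth:
  assumes fin: "finite Xi" and pos: "\<forall>\<xi>\<in>Xi. p \<xi> > 0" and z: "z \<in> NA Xi blk"
  shows "ipL Xi p (\<lambda>\<xi>. y \<xi> - CE Xi p blk y \<xi>) z = 0"
proof -
  have "ipL Xi p (CE Xi p blk y) z = ipL Xi p y z"
    unfolding ipL_vec
  proof (rule sum.cong[OF refl])
    fix i
    have zc: "\<forall>\<xi>\<in>Xi. \<forall>\<xi>'\<in>Xi. (\<forall>t\<in>{1..<blk i}. \<xi> t = \<xi>' t) \<longrightarrow> z \<xi> $ i = z \<xi>' $ i"
      by (intro ballI impI, rule NA_D[OF z], assumption+)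
    have "(\<Sum>\<xi>\<in>Xi. p \<xi> * CE Xi p blk y \<xi> $ i * z \<xi> $ i)
      = (\<Sum>\<xi>\<in>Xi. p \<xi> * ((\<Sum>\<xi>'\<in>{\<xi>'\<in>Xi. \<forall>t\<in>{1..<blk i}. \<xi> t = \<xi>' t}. p \<xi>' * y \<xi>' $ i)
                / (\<Sum>\<xi>'\<in>{\<xi>'\<in>Xi. \<forall>t\<in>{1..<blk i}. \<xi> t = \<xi>' t}. p \<xi>')) * z \<xi> $ i)"
      by (rule sum.cong[OF refl]) (simp only: CE_nth)
    also have "\<dots> = (\<Sum>\<xi>\<in>Xi. p \<xi> * y \<xi> $ i * z \<xi> $ i)"
      by (rule condexp_orth[OF fin pos zc])
    finally show "(\<Sum>\<xi>\<in>Xi. p \<xi> * CE Xi p blk y \<xi> $ i * z \<xi> $ i) = (\<Sum>\<xi>\<in>Xi. p \<xi> * y \<xi> $ i * z \<xi> $ i)" .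
  qed
  moreover have "ipL Xi p (\<lambda>\<xi>. y \<xi> - CE Xi p blk y \<xi>) z = ipL Xi p y z - ipL Xi p (CE Xi p blk y) z"
    by (rule ipL_diff_left)
  ultimately show ?thesis by linarith
qed

lemma oproj_unique:
  assumes fin: "finite Xi" and pos: "\<forall>\<xi>\<in>Xi. p \<xi> > 0" and SL: "S \<subseteq> Ln Xi"
    and Sd: "\<forall>a\<in>S. \<forall>b\<in>S. (\<lambda>\<xi>. a \<xi> - b \<xi>) \<in> S"
    and y0: "y0 \<in> S" and orth: "\<forall>z\<in>S. ipL Xi p (\<lambda>\<xi>. x \<xi> - y0 \<xi>) z = 0"
  shows "oprojL Xi p S x = y0"
  unfolding oprojL_def
proof (rule the_equality)
  show "y0 \<in> S \<and> (\<forall>z\<in>S. ipL Xi p (\<lambda>\<xi>. x \<xi> - y0 \<xi>) z = 0)" using y0 orth by blast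
next
  fix y assume y: "y \<in> S \<and> (\<forall>z\<in>S. ipL Xi p (\<lambda>\<xi>. x \<xi> - y \<xi>) z = 0)"
  define d where "d = (\<lambda>\<xi>. y \<xi> - y0 \<xi>)"
  have dS: "d \<in> S" unfolding d_def using Sd y y0 by blast
  have "ipL Xi p (\<lambda>\<xi>. x \<xi> - y0 \<xi>) d = 0" "ipL Xi p (\<lambda>\<xi>. x \<xi> - y \<xi>) d = 0"
    using orth y dS by auto
  hence "ipL Xi p (\<lambda>\<xi>. x \<xi> - y0 \<xi>) d - ipL Xi p (\<lambda>\<xi>. x \<xi> - y \<xi>) d = 0" by simp
  hence "ipL Xi p (\<lambda>\<xi>. (x \<xi> - y0 \<xi>) - (x \<xi> - y \<xi>)) d = 0"
    by (simp only: ipL_diff_left)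
  hence "ipL Xi p d d = 0" unfolding d_def by simp
  hence "\<forall>\<xi>\<in>Xi. d \<xi> = 0" using ipL_zero[OF fin pos] by blast
  moreover have "\<forall>\<xi>. \<xi> \<notin> Xi \<longrightarrow> y \<xi> = 0 \<and> y0 \<xi> = 0" using SL y y0 unfolding Ln_def by blast
  ultimately show "y = y0" unfolding d_def by (metis eq_iff_diff_eq_0 ext)
qed

lemma NA_L: "NA Xi blk \<subseteq> Ln Xi" unfolding NA_def by auto
lemma MA_L: "MA Xi p blk \<subseteq> Ln Xi" unfolding MA_def by auto

lemma NA_I: assumes "x \<in> Ln Xi"
   and "\<And>\<xi> \<xi>' i. \<xi> \<in> Xi \<Longrightarrow> \<xi>' \<in> Xi \<Longrightarrow> \<forall>t\<in>{1..<blk i}. \<xi> t = \<xi>' t \<Longrightarrow> x \<xi> $ i = x \<xi>' $ i"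
  shows "x \<in> NA Xi blk"
  unfolding NA_def
  apply (rule CollectI, rule conjI, rule assms(1))
  apply (intro ballI allI impI)
  apply (rule assms(2))
    apply assumption+
  done

lemma NA_Ln: "a \<in> NA Xi blk \<Longrightarrow> a \<in> Ln Xi" using NA_L by blast

lemma NA_diff: assumes a: "a \<in> NA Xi blk" and b: "b \<in> NA Xi blk" shows "(\<lambda>\<xi>. a \<xi> - b \<xi>) \<in> NA Xi blk"
proof (rule NA_I)
  show "(\<lambda>\<xi>. a \<xi> - b \<xi>) \<in> Ln Xi" using NA_Ln[OF a] NA_Ln[OF b] unfolding Ln_def by simp
  fix \<xi> \<xi>' i assume pr: "\<xi> \<in> Xi" "\<xi>' \<in> Xi" "\<forall>t\<in>{1..<blk i}. \<xi> t = \<xi>' t"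
  show "(a \<xi> - b \<xi>) $ i = (a \<xi>' - b \<xi>') $ i" using NA_D[OF a pr] NA_D[OF b pr] by simp
qed
lemma NA_add: assumes a: "a \<in> NA Xi blk" and b: "b \<in> NA Xi blk" shows "(\<lambda>\<xi>. a \<xi> + b \<xi>) \<in> NA Xi blk"
proof (rule NA_I)
  show "(\<lambda>\<xi>. a \<xi> + b \<xi>) \<in> Ln Xi" using NA_Ln[OF a] NA_Ln[OF b] unfolding Ln_def by simp
  fix \<xi> \<xi>' i assume pr: "\<xi> \<in> Xi" "\<xi>' \<in> Xi" "\<forall>t\<in>{1..<blk i}. \<xi> t = \<xi>' t"
  show "(a \<xi> + b \<xi>) $ i = (a \<xi>' + b \<xi>') $ i" using NA_D[OF a pr] NA_D[OF b pr] by simp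
qed
lemma NA_scale: assumes a: "a \<in> NA Xi blk" shows "(\<lambda>\<xi>. c *\<^sub>R a \<xi>) \<in> NA Xi blk"
proof (rule NA_I)
  show "(\<lambda>\<xi>. c *\<^sub>R a \<xi>) \<in> Ln Xi" using NA_Ln[OF a] unfolding Ln_def by simp
  fix \<xi> \<xi>' i assume pr: "\<xi> \<in> Xi" "\<xi>' \<in> Xi" "\<forall>t\<in>{1..<blk i}. \<xi> t = \<xi>' t"
  show "(c *\<^sub>R a \<xi>) $ i = (c *\<^sub>R a \<xi>') $ i" using NA_D[OF a pr] by simp
qed
lemma MA_diff: "a \<in> MA Xi p blk \<Longrightarrow> b \<in> MA Xi p blk \<Longrightarrow> (\<lambda>\<xi>. a \<xi> - b \<xi>) \<in> MA Xi p blk"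
  unfolding MA_def Ln_def by (auto simp: ipL_diff_right)
lemma MA_add: "a \<in> MA Xi p blk \<Longrightarrow> b \<in> MA Xi p blk \<Longrightarrow> (\<lambda>\<xi>. a \<xi> + b \<xi>) \<in> MA Xi p blk"
  unfolding MA_def Ln_def by (auto simp: ipL_add_right)
lemma MA_scale: "a \<in> MA Xi p blk \<Longrightarrow> (\<lambda>\<xi>. c *\<^sub>R a \<xi>) \<in> MA Xi p blk"
  unfolding MA_def Ln_def by (auto simp: ipL_scale_right)
lemma NA_MA_orth: "a \<in> NA Xi blk \<Longrightarrow> b \<in> MA Xi p blk \<Longrightarrow> ipL Xi p a b = 0"
  unfolding MA_def by auto
lemma MA_NA_orth: "a \<in> MA Xi p blk \<Longrightarrow> b \<in> NA Xi blk \<Longrightarrow> ipL Xi p a b = 0"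
  by (subst ipL_commute) (rule NA_MA_orth)

lemma PN_eq: assumes "finite Xi" "\<forall>\<xi>\<in>Xi. p \<xi> > 0"
  shows "oprojL Xi p (NA Xi blk) y = CE Xi p blk y"
  by (rule oproj_unique[OF assms NA_L]) (auto intro: NA_diff CE_NA CE_orth[OF assms])

lemma PM_eq: assumes fin: "finite Xi" and pos: "\<forall>\<xi>\<in>Xi. p \<xi> > 0" and y: "y \<in> Ln Xi"
  shows "oprojL Xi p (MA Xi p blk) y = (\<lambda>\<xi>. y \<xi> - CE Xi p blk y \<xi>)"
proof (rule oproj_unique[OF fin pos MA_L])
  show "\<forall>a\<in>MA Xi p blk. \<forall>b\<in>MA Xi p blk. (\<lambda>\<xi>. a \<xi> - b \<xi>) \<in> MA Xi p blk" by (auto intro: MA_diff)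
  have "CE Xi p blk y \<in> Ln Xi" using CE_NA NA_L by blast
  hence L: "(\<lambda>\<xi>. y \<xi> - CE Xi p blk y \<xi>) \<in> Ln Xi" using y unfolding Ln_def by auto
  show "(\<lambda>\<xi>. y \<xi> - CE Xi p blk y \<xi>) \<in> MA Xi p blk"
    unfolding MA_def
  proof (rule CollectI, rule conjI[OF L], intro ballI)
    fix x assume "x \<in> NA Xi blk"
    show "ipL Xi p x (\<lambda>\<xi>. y \<xi> - CE Xi p blk y \<xi>) = 0"
      by (subst ipL_commute) (rule CE_orth[OF fin pos \<open>x \<in> NA Xi blk\<close>])
  qed
  show "\<forall>z\<in>MA Xi p blk. ipL Xi p (\<lambda>\<xi>. y \<xi> - (y \<xi> - CE Xi p blk y \<xi>)) z = 0"
    using NA_MA_orth[OF CE_NA[of Xi p blk y], of _ p] by simp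
qed

lemma arith_step:
  fixes A B c \<phi> G t \<tau> \<theta> D D' :: real
  assumes A: "A > 0" and B: "B \<ge> 0" and c: "c > 0" and phi: "\<phi> \<ge> c * (A + B)" and G: "G \<ge> \<phi>"
    and t: "t = \<tau> * (\<phi> / A)" and tau: "1 - \<theta> \<le> \<tau>" "\<tau> \<le> 1 + \<theta>" and th: "0 < \<theta>" "\<theta> < 1"
    and D: "D' = D - 2 * t * G + t\<^sup>2 * A"
  shows "D' \<le> D - (1 - \<theta>\<^sup>2) * c\<^sup>2 * (A + B)"
proof -
  have phipos: "\<phi> > 0" using phi A B c by (smt (verit) mult_pos_pos)
  have tpos: "t \<ge> 0" using t tau th phipos A by simp
  have "D' \<le> D - 2 * t * \<phi> + t\<^sup>2 * A" using D G tpos by (smt (verit) mult_left_mono)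
  moreover have "2 * t * \<phi> - t\<^sup>2 * A = (2 * \<tau> - \<tau>\<^sup>2) * (\<phi>\<^sup>2 / A)"
    using A unfolding t by (simp add: field_simps power2_eq_square)
  moreover have "(2 * \<tau> - \<tau>\<^sup>2) * (\<phi>\<^sup>2 / A) \<ge> (1 - \<theta>\<^sup>2) * (c\<^sup>2 * (A + B))"
  proof (rule mult_mono)
    have "(1 - \<tau>)\<^sup>2 \<le> \<theta>\<^sup>2" using tau th by (simp add: abs_le_iff power2_le_iff_abs_le)
    thus "1 - \<theta>\<^sup>2 \<le> 2 * \<tau> - \<tau>\<^sup>2" by (simp add: power2_eq_square algebra_simps)
    have "(c * (A + B))\<^sup>2 \<le> \<phi>\<^sup>2" using phi c A B by (intro power_mono) auto
    hence "c\<^sup>2 * (A + B)\<^sup>2 / A \<le> \<phi>\<^sup>2 / A" using A by (simp add: divide_right_mono power_mult_distrib)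
    moreover have "c\<^sup>2 * (A + B) \<le> c\<^sup>2 * (A + B)\<^sup>2 / A"
    proof -
      have "(A + B) * A \<le> (A + B) * (A + B)" using A B by (intro mult_left_mono) auto
      hence "c\<^sup>2 * (A + B) * A \<le> c\<^sup>2 * (A + B)\<^sup>2"
        using mult_left_mono[of "(A + B) * A" "(A + B) * (A + B)" "c\<^sup>2"]
        by (simp add: power2_eq_square mult.assoc)
      thus ?thesis using A by (simp add: pos_le_divide_eq)
    qed
    ultimately show "c\<^sup>2 * (A + B) \<le> \<phi>\<^sup>2 / A" by linarith
    show "0 \<le> 2 * \<tau> - \<tau>\<^sup>2" using \<open>1 - \<theta>\<^sup>2 \<le> 2 * \<tau> - \<tau>\<^sup>2\<close> th
      by (smt (verit) power_le_one)
    show "0 \<le> c\<^sup>2 * (A + B)" using A B by simp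
  qed
  ultimately show ?thesis by (simp add: mult.assoc)
qed


lemma mono_pt:
  fixes n1 n2 Fu Fv u v :: "real^'n"
  assumes "n1 \<in> normal_cone S u" "n2 \<in> normal_cone S v" "(Fu - Fv) \<bullet> (u - v) \<ge> 0"
  shows "(n1 + Fu - (n2 + Fv)) \<bullet> (u - v) \<ge> 0"
proof -
  have "u \<in> S" "v \<in> S" using assms unfolding normal_cone_def by auto
  hence "n1 \<bullet> (v - u) \<le> 0" "n2 \<bullet> (u - v) \<le> 0" using assms unfolding normal_cone_def by auto
  moreover have "n1 \<bullet> (v - u) = - (n1 \<bullet> (u - v))" by (simp add: inner_diff_right)
  moreover have "(n1 + Fu - (n2 + Fv)) \<bullet> (u - v) = n1 \<bullet> (u - v) - n2 \<bullet> (u - v) + (Fu - Fv) \<bullet> (u - v)"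
    by (simp add: inner_simps)
  ultimately show ?thesis using assms(3) by linarith
qed

lemma ipL_sq_diff: "ipL X p (\<lambda>\<xi>. u \<xi> - t *\<^sub>R v \<xi>) (\<lambda>\<xi>. u \<xi> - t *\<^sub>R v \<xi>)
   = ipL X p u u - 2 * t * ipL X p u v + t\<^sup>2 * ipL X p v v"
  by (simp only: ipL_lin ipL_commute[of X p v u]) (simp add: algebra_simps power2_eq_square)
lemma ipL_sq_add: "ipL X p (\<lambda>\<xi>. u \<xi> + t *\<^sub>R v \<xi>) (\<lambda>\<xi>. u \<xi> + t *\<^sub>R v \<xi>)
   = ipL X p u u + 2 * t * ipL X p u v + t\<^sup>2 * ipL X p v v"
  by (simp only: ipL_lin ipL_commute[of X p v u]) (simp add: algebra_simps power2_eq_square)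
lemma ipL_sq_minus: "ipL X p (\<lambda>\<xi>. u \<xi> - v \<xi>) (\<lambda>\<xi>. u \<xi> - v \<xi>)
   = ipL X p u u - 2 * ipL X p u v + ipL X p v v"
  by (simp only: ipL_lin ipL_commute[of X p v u])
lemma ipL_orth_split: "ipL X p u v = 0 \<Longrightarrow> ipL X p (\<lambda>\<xi>. u \<xi> + v \<xi>) (\<lambda>\<xi>. u \<xi> + v \<xi>)
   = ipL X p u u + ipL X p v v"
  by (simp only: ipL_lin ipL_commute[of X p v u])

lemma fejer_step:
  fixes X W Y U xs ws :: "(nat \<Rightarrow> 'c) \<Rightarrow> real^'n::finite"
    and PN PM :: "((nat \<Rightarrow> 'c) \<Rightarrow> real^'n) \<Rightarrow> ((nat \<Rightarrow> 'c) \<Rightarrow> real^'n)"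
    and F :: "real^'n \<Rightarrow> (nat \<Rightarrow> 'c) \<Rightarrow> real^'n"
  assumes fin: "finite Xi" and pos: "\<forall>\<xi>\<in>Xi. p \<xi> > 0"
    and PNd: "\<And>y. y \<in> Ln Xi \<Longrightarrow> PN y \<in> NA Xi blk \<and> PM y \<in> MA Xi p blk \<and> (\<forall>\<xi>. PN y \<xi> + PM y \<xi> = y \<xi>)"
    and X: "X \<in> NA Xi blk" and W: "W \<in> MA Xi p blk" and Y: "Y \<in> Ln Xi" and U: "U \<in> Ln Xi"
    and xs: "xs \<in> NA Xi blk" and ws: "ws \<in> MA Xi p blk"
    and sol: "\<forall>\<xi>\<in>Xi. - F (xs \<xi>) \<xi> - ws \<xi> \<in> normal_cone (C \<xi>) (xs \<xi>)"
    and Fm: "\<forall>\<xi>\<in>Xi. \<forall>u v. (F u \<xi> - F v \<xi>) \<bullet> (u - v) \<ge> 0"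
    and incl: "\<forall>\<xi>\<in>Xi. r *\<^sub>R (X \<xi> - Y \<xi>) - W \<xi> - F (U \<xi>) \<xi> \<in> normal_cone (C \<xi>) (U \<xi>)"
    and r: "r > 0"
    and inex: "ipL Xi p (\<lambda>\<xi>. U \<xi> - Y \<xi>) (\<lambda>\<xi>. U \<xi> - Y \<xi>)
                 \<le> s\<^sup>2 * (ipL Xi p (\<lambda>\<xi>. X \<xi> - PN Y \<xi> + PM U \<xi>) (\<lambda>\<xi>. X \<xi> - PN Y \<xi> + PM U \<xi>)
                  + ipL Xi p (\<lambda>\<xi>. X \<xi> - PN U \<xi> + PM Y \<xi>) (\<lambda>\<xi>. X \<xi> - PN U \<xi> + PM Y \<xi>))"
    and s: "0 \<le> s" "s < sb" "sb < 1"
    and bnz: "\<exists>\<xi>\<in>Xi. X \<xi> - PN U \<xi> + PM Y \<xi> \<noteq> 0"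
    and tau: "1 - \<theta> \<le> \<tau>" "\<tau> \<le> 1 + \<theta>" and th: "0 < \<theta>" "\<theta> < 1"
    and X': "X' = (\<lambda>\<xi>. X \<xi> - (\<tau> * (ipL Xi p (\<lambda>\<xi>. X \<xi> - PN Y \<xi> + PM U \<xi>) (\<lambda>\<xi>. X \<xi> - PN U \<xi> + PM Y \<xi>)
                  / ipL Xi p (\<lambda>\<xi>. X \<xi> - PN Y \<xi> + PM U \<xi>) (\<lambda>\<xi>. X \<xi> - PN Y \<xi> + PM U \<xi>)))
                 *\<^sub>R (X \<xi> - PN Y \<xi>))"
    and W': "W' = (\<lambda>\<xi>. W \<xi> + (\<tau> * (ipL Xi p (\<lambda>\<xi>. X \<xi> - PN Y \<xi> + PM U \<xi>) (\<lambda>\<xi>. X \<xi> - PN U \<xi> + PM Y \<xi>)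
                  / ipL Xi p (\<lambda>\<xi>. X \<xi> - PN Y \<xi> + PM U \<xi>) (\<lambda>\<xi>. X \<xi> - PN Y \<xi> + PM U \<xi>)) * r)
                 *\<^sub>R PM U \<xi>)"
  shows "ipL Xi p (\<lambda>\<xi>. X' \<xi> - xs \<xi>) (\<lambda>\<xi>. X' \<xi> - xs \<xi>) + ipL Xi p (\<lambda>\<xi>. W' \<xi> - ws \<xi>) (\<lambda>\<xi>. W' \<xi> - ws \<xi>) / r\<^sup>2
     \<le> ipL Xi p (\<lambda>\<xi>. X \<xi> - xs \<xi>) (\<lambda>\<xi>. X \<xi> - xs \<xi>) + ipL Xi p (\<lambda>\<xi>. W \<xi> - ws \<xi>) (\<lambda>\<xi>. W \<xi> - ws \<xi>) / r\<^sup>2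
       - (1 - \<theta>\<^sup>2) * ((1 - sb\<^sup>2) / 2)\<^sup>2 *
        (ipL Xi p (\<lambda>\<xi>. X \<xi> - PN Y \<xi> + PM U \<xi>) (\<lambda>\<xi>. X \<xi> - PN Y \<xi> + PM U \<xi>)
        + ipL Xi p (\<lambda>\<xi>. X \<xi> - PN U \<xi> + PM Y \<xi>) (\<lambda>\<xi>. X \<xi> - PN U \<xi> + PM Y \<xi>))"
proof -
  let ?ip = "ipL Xi p"
  define a where "a = (\<lambda>\<xi>. X \<xi> - PN Y \<xi> + PM U \<xi>)"
  define b where "b = (\<lambda>\<xi>. X \<xi> - PN U \<xi> + PM Y \<xi>)"
  define dx where "dx = (\<lambda>\<xi>. X \<xi> - PN Y \<xi>)"
  define db where "db = (\<lambda>\<xi>. X \<xi> - PN U \<xi>)"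
  define A where "A = ?ip a a"
  define B where "B = ?ip b b"
  define \<phi> where "\<phi> = ?ip a b"
  define t where "t = \<tau> * (\<phi> / A)"
  have PNY: "PN Y \<in> NA Xi blk" and PMY: "PM Y \<in> MA Xi p blk" and Yid: "\<And>\<xi>. Y \<xi> = PN Y \<xi> + PM Y \<xi>"
    using PNd[OF Y] by auto
  have PNU: "PN U \<in> NA Xi blk" and PMU: "PM U \<in> MA Xi p blk" and Uid: "\<And>\<xi>. U \<xi> = PN U \<xi> + PM U \<xi>"
    using PNd[OF U] by auto
  have dxN: "dx \<in> NA Xi blk" unfolding dx_def by (rule NA_diff[OF X PNY])
  have dbN: "db \<in> NA Xi blk" unfolding db_def by (rule NA_diff[OF X PNU])
  have a_eq: "a = (\<lambda>\<xi>. dx \<xi> + PM U \<xi>)" unfolding a_def dx_def by simp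
  have b_eq: "b = (\<lambda>\<xi>. db \<xi> + PM Y \<xi>)" unfolding b_def db_def by simp
  have A_split: "A = ?ip dx dx + ?ip (PM U) (PM U)"
    unfolding A_def a_eq by (rule ipL_orth_split[OF NA_MA_orth[OF dxN PMU]])
  have B_split: "B = ?ip db db + ?ip (PM Y) (PM Y)"
    unfolding B_def b_eq by (rule ipL_orth_split[OF NA_MA_orth[OF dbN PMY]])
  have phi_eq: "\<phi> = ?ip dx db + ?ip (PM U) (PM Y)"
    unfolding \<phi>_def a_eq b_eq
    by (simp only: ipL_lin NA_MA_orth[OF dxN PMY] MA_NA_orth[OF PMU dbN], simp?)
  obtain \<xi>0 where \<xi>0: "\<xi>0 \<in> Xi" "b \<xi>0 \<noteq> 0" using bnz unfolding b_def by blast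
  have "p \<xi>0 * (norm (b \<xi>0))\<^sup>2 \<le> B" unfolding B_def by (rule ipL_point[OF fin pos \<xi>0(1)])
  moreover have "p \<xi>0 * (norm (b \<xi>0))\<^sup>2 > 0" using \<xi>0 pos by simp
  ultimately have Bpos: "B > 0" by linarith
  have A0: "A \<ge> 0" unfolding A_def by (rule ipL_nonneg[OF pos])
  have ab: "?ip (\<lambda>\<xi>. U \<xi> - Y \<xi>) (\<lambda>\<xi>. U \<xi> - Y \<xi>) = ?ip (\<lambda>\<xi>. a \<xi> - b \<xi>) (\<lambda>\<xi>. a \<xi> - b \<xi>)"
  proof -
    have "(\<lambda>\<xi>. U \<xi> - Y \<xi>) = (\<lambda>\<xi>. a \<xi> - b \<xi>)"
    proof
      fix \<xi> show "U \<xi> - Y \<xi> = a \<xi> - b \<xi>" unfolding a_def b_def using Uid[of \<xi>] Yid[of \<xi>]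
        by (simp add: algebra_simps)
    qed
    thus ?thesis by simp
  qed
  have "?ip (\<lambda>\<xi>. a \<xi> - b \<xi>) (\<lambda>\<xi>. a \<xi> - b \<xi>) = A - 2 * \<phi> + B"
    unfolding A_def B_def \<phi>_def by (rule ipL_sq_minus)
  hence "A - 2 * \<phi> + B \<le> s\<^sup>2 * (A + B)" using inex ab unfolding A_def B_def a_def b_def by simp
  moreover have "s\<^sup>2 \<le> sb\<^sup>2" using s by (intro power_mono) auto
  moreover have "A + B \<ge> 0" using A0 Bpos by simp
  ultimately have "A - 2 * \<phi> + B \<le> sb\<^sup>2 * (A + B)" by (smt (verit) mult_right_mono)
  hence phi_ge: "\<phi> \<ge> ((1 - sb\<^sup>2) / 2) * (A + B)" by (simp add: algebra_simps)
  have c_pos: "(1 - sb\<^sup>2) / 2 > 0" using s by (simp add: power_less_one_iff abs_less_iff power2_less_1_iff)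
  have phipos: "\<phi> > 0" using phi_ge c_pos A0 Bpos by (smt (verit) mult_pos_pos)
  have Apos: "A > 0"
  proof (rule ccontr)
    assume "\<not> A > 0"
    hence "A = 0" using A0 by simp
    hence "\<forall>\<xi>\<in>Xi. a \<xi> = 0" using ipL_zero[OF fin pos] unfolding A_def by blast
    hence "\<phi> = 0" unfolding \<phi>_def by (intro ipL_zero_left) auto
    thus False using phipos by simp
  qed
  have mono: "?ip (\<lambda>\<xi>. r *\<^sub>R (X \<xi> - Y \<xi>) - (W \<xi> - ws \<xi>)) (\<lambda>\<xi>. U \<xi> - xs \<xi>) \<ge> 0"
    unfolding ipL_def
  proof (rule sum_nonneg)
    fix \<xi> assume \<xi>: "\<xi> \<in> Xi"
    have "((r *\<^sub>R (X \<xi> - Y \<xi>) - W \<xi> - F (U \<xi>) \<xi>) + F (U \<xi>) \<xi> - ((- F (xs \<xi>) \<xi> - ws \<xi>) + F (xs \<xi>) \<xi>))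
          \<bullet> (U \<xi> - xs \<xi>) \<ge> 0"
      by (rule mono_pt) (use incl sol Fm \<xi> in auto)
    moreover have "(r *\<^sub>R (X \<xi> - Y \<xi>) - W \<xi> - F (U \<xi>) \<xi>) + F (U \<xi>) \<xi> - ((- F (xs \<xi>) \<xi> - ws \<xi>) + F (xs \<xi>) \<xi>)
        = r *\<^sub>R (X \<xi> - Y \<xi>) - (W \<xi> - ws \<xi>)" by (simp add: algebra_simps)
    ultimately have "0 \<le> (r *\<^sub>R (X \<xi> - Y \<xi>) - (W \<xi> - ws \<xi>)) \<bullet> (U \<xi> - xs \<xi>)"
      by (simp only:)
    moreover have "p \<xi> \<ge> 0" using pos \<xi> by auto
    ultimately show "0 \<le> p \<xi> * ((r *\<^sub>R (X \<xi> - Y \<xi>) - (W \<xi> - ws \<xi>)) \<bullet> (U \<xi> - xs \<xi>))"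
      by simp
  qed
  hence mono2: "r * ?ip (\<lambda>\<xi>. X \<xi> - Y \<xi>) (\<lambda>\<xi>. U \<xi> - xs \<xi>) - ?ip (\<lambda>\<xi>. W \<xi> - ws \<xi>) (\<lambda>\<xi>. U \<xi> - xs \<xi>) \<ge> 0"
    by (simp only: ipL_diff_left ipL_scale_left)
  have Wws: "(\<lambda>\<xi>. W \<xi> - ws \<xi>) \<in> MA Xi p blk" by (rule MA_diff[OF W ws])
  have PNUxs: "(\<lambda>\<xi>. PN U \<xi> - xs \<xi>) \<in> NA Xi blk" by (rule NA_diff[OF PNU xs])
  have Xxs: "(\<lambda>\<xi>. X \<xi> - xs \<xi>) \<in> NA Xi blk" by (rule NA_diff[OF X xs])
  have Uxs: "(\<lambda>\<xi>. U \<xi> - xs \<xi>) = (\<lambda>\<xi>. (PN U \<xi> - xs \<xi>) + PM U \<xi>)"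
    using Uid by (simp add: algebra_simps)
  have e1: "?ip (\<lambda>\<xi>. W \<xi> - ws \<xi>) (\<lambda>\<xi>. U \<xi> - xs \<xi>) = ?ip (\<lambda>\<xi>. W \<xi> - ws \<xi>) (PM U)"
    unfolding Uxs by (simp only: ipL_add_right MA_NA_orth[OF Wws PNUxs], simp?)
  have XY: "(\<lambda>\<xi>. X \<xi> - Y \<xi>) = (\<lambda>\<xi>. dx \<xi> - PM Y \<xi>)"
    unfolding dx_def using Yid by (simp add: algebra_simps)
  have PNUxs2: "(\<lambda>\<xi>. PN U \<xi> - xs \<xi>) = (\<lambda>\<xi>. (X \<xi> - xs \<xi>) - db \<xi>)"
    unfolding db_def by (simp add: algebra_simps)
  have e2: "?ip (\<lambda>\<xi>. X \<xi> - Y \<xi>) (\<lambda>\<xi>. U \<xi> - xs \<xi>) = ?ip dx (\<lambda>\<xi>. X \<xi> - xs \<xi>) - \<phi>"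
  proof -
    have "?ip (\<lambda>\<xi>. X \<xi> - Y \<xi>) (\<lambda>\<xi>. U \<xi> - xs \<xi>)
       = ?ip dx (\<lambda>\<xi>. PN U \<xi> - xs \<xi>) + ?ip dx (PM U) - ?ip (PM Y) (\<lambda>\<xi>. PN U \<xi> - xs \<xi>) - ?ip (PM Y) (PM U)"
      unfolding XY Uxs by (simp only: ipL_lin, simp?)
    also have "?ip dx (PM U) = 0" by (rule NA_MA_orth[OF dxN PMU])
    also have "?ip (PM Y) (\<lambda>\<xi>. PN U \<xi> - xs \<xi>) = 0" by (rule MA_NA_orth[OF PMY PNUxs])
    also have "?ip dx (\<lambda>\<xi>. PN U \<xi> - xs \<xi>) = ?ip dx (\<lambda>\<xi>. X \<xi> - xs \<xi>) - ?ip dx db"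
      unfolding PNUxs2 by (simp only: ipL_diff_right, simp?)
    finally show ?thesis unfolding phi_eq by (simp add: ipL_commute[of Xi p "PM Y" "PM U"])
  qed
  define G where "G = ?ip (\<lambda>\<xi>. X \<xi> - xs \<xi>) dx - ?ip (\<lambda>\<xi>. W \<xi> - ws \<xi>) (PM U) / r"
  have "r * (?ip dx (\<lambda>\<xi>. X \<xi> - xs \<xi>) - \<phi>) - ?ip (\<lambda>\<xi>. W \<xi> - ws \<xi>) (PM U) \<ge> 0"
    using mono2 e1 e2 by simp
  hence G_ge: "G \<ge> \<phi>" unfolding G_def using r
    by (simp add: ipL_commute[of Xi p dx] field_simps)
  have X'eq: "(\<lambda>\<xi>. X' \<xi> - xs \<xi>) = (\<lambda>\<xi>. (X \<xi> - xs \<xi>) - t *\<^sub>R dx \<xi>)"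
    unfolding X' t_def \<phi>_def A_def a_def b_def dx_def by (simp add: algebra_simps)
  have W'eq: "(\<lambda>\<xi>. W' \<xi> - ws \<xi>) = (\<lambda>\<xi>. (W \<xi> - ws \<xi>) + (t * r) *\<^sub>R PM U \<xi>)"
    unfolding W' t_def \<phi>_def A_def a_def b_def by (simp add: algebra_simps)
  have "?ip (\<lambda>\<xi>. X' \<xi> - xs \<xi>) (\<lambda>\<xi>. X' \<xi> - xs \<xi>) + ?ip (\<lambda>\<xi>. W' \<xi> - ws \<xi>) (\<lambda>\<xi>. W' \<xi> - ws \<xi>) / r\<^sup>2
      = (?ip (\<lambda>\<xi>. X \<xi> - xs \<xi>) (\<lambda>\<xi>. X \<xi> - xs \<xi>) + ?ip (\<lambda>\<xi>. W \<xi> - ws \<xi>) (\<lambda>\<xi>. W \<xi> - ws \<xi>) / r\<^sup>2)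
        - 2 * t * G + t\<^sup>2 * A"
    unfolding X'eq W'eq ipL_sq_diff ipL_sq_add A_split G_def using r
    by (simp add: field_simps power2_eq_square)
  from arith_step[OF Apos less_imp_le[OF Bpos] c_pos phi_ge G_ge t_def tau th this]
  show ?thesis unfolding A_def B_def a_def b_def .
qed

lemma CE_MA: assumes fin: "finite Xi" and pos: "\<forall>\<xi>\<in>Xi. p \<xi> > 0" and y: "y \<in> Ln Xi"
  shows "(\<lambda>\<xi>. y \<xi> - CE Xi p blk y \<xi>) \<in> MA Xi p blk"
proof -
  have "CE Xi p blk y \<in> Ln Xi" using CE_NA NA_L by blast
  hence L: "(\<lambda>\<xi>. y \<xi> - CE Xi p blk y \<xi>) \<in> Ln Xi" using y unfolding Ln_def by auto
  show ?thesis
    unfolding MA_def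
  proof (rule CollectI, rule conjI[OF L], intro ballI)
    fix x assume "x \<in> NA Xi blk"
    show "ipL Xi p x (\<lambda>\<xi>. y \<xi> - CE Xi p blk y \<xi>) = 0"
      by (subst ipL_commute) (rule CE_orth[OF fin pos \<open>x \<in> NA Xi blk\<close>])
  qed
qed

lemma PNd_lemma: assumes fin: "finite Xi" and pos: "\<forall>\<xi>\<in>Xi. p \<xi> > 0" and y: "y \<in> Ln Xi"
  shows "oprojL Xi p (NA Xi blk) y \<in> NA Xi blk \<and> oprojL Xi p (MA Xi p blk) y \<in> MA Xi p blk
     \<and> (\<forall>\<xi>. oprojL Xi p (NA Xi blk) y \<xi> + oprojL Xi p (MA Xi p blk) y \<xi> = y \<xi>)"
  unfolding PN_eq[OF fin pos] PM_eq[OF fin pos y] using CE_NA CE_MA[OF fin pos y] by auto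

lemma ipL_tendsto_point:
  assumes fin: "finite Xi" and pos: "\<forall>\<xi>\<in>Xi. p \<xi> > 0" and \<xi>: "\<xi> \<in> Xi"
    and lim: "(\<lambda>k. ipL Xi p (u k) (u k)) \<longlonglongrightarrow> 0"
  shows "(\<lambda>k. u k \<xi>) \<longlonglongrightarrow> 0"
proof -
  have p: "p \<xi> > 0" using pos \<xi> by auto
  have b: "(norm (u k \<xi>))\<^sup>2 \<le> ipL Xi p (u k) (u k) / p \<xi>" for k
    using ipL_point[OF fin pos \<xi>, of "u k"] p by (simp add: field_simps)
  have "(\<lambda>k. ipL Xi p (u k) (u k) / p \<xi>) \<longlonglongrightarrow> 0 / p \<xi>" by (intro tendsto_divide lim tendsto_const) (use p in auto)
  hence l0: "(\<lambda>k. ipL Xi p (u k) (u k) / p \<xi>) \<longlonglongrightarrow> 0" by simp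
  have l2: "(\<lambda>k. (norm (u k \<xi>))\<^sup>2) \<longlonglongrightarrow> 0"
    by (rule tendsto_sandwich[OF _ _ tendsto_const l0]) (simp_all add: b)
  hence "(\<lambda>k. sqrt ((norm (u k \<xi>))\<^sup>2)) \<longlonglongrightarrow> sqrt 0" by (intro tendsto_real_sqrt)
  hence "(\<lambda>k. norm (u k \<xi>)) \<longlonglongrightarrow> 0" by simp
  thus ?thesis by (simp add: tendsto_norm_zero_iff)
qed

lemma ipL_tendsto:
  assumes "\<forall>\<xi>\<in>Xi. (\<lambda>k. u k \<xi>) \<longlonglongrightarrow> u0 \<xi>" "\<forall>\<xi>\<in>Xi. (\<lambda>k. v k \<xi>) \<longlonglongrightarrow> v0 \<xi>"
  shows "(\<lambda>k. ipL Xi p (u k) (v k)) \<longlonglongrightarrow> ipL Xi p u0 v0"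
  unfolding ipL_def using assms by (intro tendsto_sum tendsto_mult tendsto_const tendsto_inner) auto

lemma common_subseq:
  fixes f :: "'a \<Rightarrow> nat \<Rightarrow> 'b::heine_borel"
  assumes "finite S" "\<forall>\<xi>\<in>S. bounded (range (f \<xi>))"
  shows "\<exists>h. strict_mono h \<and> (\<forall>\<xi>\<in>S. \<exists>l. (\<lambda>j. f \<xi> (h j)) \<longlonglongrightarrow> l)"
  using assms
proof (induction S rule: finite_induct)
  case empty
  show ?case by (rule exI[of _ "\<lambda>x. x"]) (simp add: strict_mono_def)
next
  case (insert a S)
  then obtain h where h: "strict_mono h" "\<forall>\<xi>\<in>S. \<exists>l. (\<lambda>j. f \<xi> (h j)) \<longlonglongrightarrow> l" by auto
  have "bounded (range (f a \<circ> h))"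
    using insert.prems by (metis bounded_subset image_comp image_subset_iff insertI1 rangeI)
  then obtain l r where r: "strict_mono r" "((f a \<circ> h) \<circ> r) \<longlonglongrightarrow> l"
    using bounded_imp_convergent_subsequence by blast
  show ?case
  proof (rule exI, intro conjI ballI)
    show "strict_mono (h \<circ> r)" using h(1) r(1) by (rule strict_mono_o)
    fix \<xi> assume "\<xi> \<in> insert a S"
    then consider "\<xi> = a" | "\<xi> \<in> S" by auto
    then show "\<exists>l. (\<lambda>j. f \<xi> ((h \<circ> r) j)) \<longlonglongrightarrow> l"
    proof cases
      case 1 thus ?thesis using r(2) by (auto simp: o_def)
    next
      case 2
      then obtain l' where "(\<lambda>j. f \<xi> (h j)) \<longlonglongrightarrow> l'" using h(2) by blast
      from LIMSEQ_subseq_LIMSEQ[OF this r(1)] show ?thesis by (auto simp: o_def)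
    qed
  qed
qed

lemma normal_cone_limit:
  fixes n u :: "nat \<Rightarrow> real^'n"
  assumes S: "closed S" and nc: "\<forall>j. n j \<in> normal_cone S (u j)"
    and lu: "u \<longlonglongrightarrow> u0" and ln: "n \<longlonglongrightarrow> n0"
  shows "n0 \<in> normal_cone S u0"
proof -
  have uS: "\<forall>j. u j \<in> S" using nc unfolding normal_cone_def by auto
  have u0S: "u0 \<in> S" by (rule closed_sequentially[OF S]) (use uS lu in auto)
  have "n0 \<bullet> (y - u0) \<le> 0" if y: "y \<in> S" for y
  proof -
    have "(\<lambda>j. n j \<bullet> (y - u j)) \<longlonglongrightarrow> n0 \<bullet> (y - u0)"
      by (intro tendsto_inner ln tendsto_diff tendsto_const lu)
    moreover have "\<forall>j. n j \<bullet> (y - u j) \<le> 0" using nc y unfolding normal_cone_def by auto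
    ultimately show ?thesis by (intro LIMSEQ_le_const2) auto
  qed
  thus ?thesis using u0S unfolding normal_cone_def by auto
qed

lemma dec_subseq_zero:
  fixes D :: "nat \<Rightarrow> real"
  assumes dec: "\<forall>k. D (Suc k) \<le> D k" and nn: "\<forall>k. D k \<ge> 0"
    and h: "strict_mono h" and sub: "(\<lambda>j. D (h j)) \<longlonglongrightarrow> 0"
  shows "D \<longlonglongrightarrow> 0"
proof -
  have "decseq D" using dec by (intro decseq_SucI) auto
  then obtain L where L: "D \<longlonglongrightarrow> L" using decseq_convergent[of D 0] nn by blast
  from LIMSEQ_subseq_LIMSEQ[OF L h] have "(\<lambda>j. D (h j)) \<longlonglongrightarrow> L" by (simp add: o_def)
  with sub have "L = 0" using LIMSEQ_unique by blast
  with L show ?thesis by simp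
qed


lemma bound_from_ipL:
  fixes u :: "nat \<Rightarrow> (nat \<Rightarrow> 'c) \<Rightarrow> real^'n::finite"
  assumes fin: "finite Xi" and pos: "\<forall>\<xi>\<in>Xi. p \<xi> > 0" and \<xi>: "\<xi> \<in> Xi"
    and K: "\<forall>k. ipL Xi p (\<lambda>\<xi>. u k \<xi> - c \<xi>) (\<lambda>\<xi>. u k \<xi> - c \<xi>) \<le> K"
  shows "bounded (range (\<lambda>k. u k \<xi>))"
proof (rule boundedI)
  fix y assume "y \<in> range (\<lambda>k. u k \<xi>)"
  then obtain k where y: "y = u k \<xi>" by auto
  have p: "p \<xi> > 0" using pos \<xi> by auto
  have "p \<xi> * (norm (u k \<xi> - c \<xi>))\<^sup>2 \<le> K"
    using ipL_point[OF fin pos \<xi>, of "\<lambda>\<xi>. u k \<xi> - c \<xi>"] spec[OF K, of k] by linarith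
  hence "(norm (u k \<xi> - c \<xi>))\<^sup>2 \<le> K / p \<xi>" using p by (simp add: field_simps)
  hence "norm (u k \<xi> - c \<xi>) \<le> sqrt (K / p \<xi>)" by (simp add: real_le_rsqrt)
  moreover have "norm (u k \<xi>) \<le> norm (u k \<xi> - c \<xi>) + norm (c \<xi>)" using norm_triangle_ineq[of "u k \<xi> - c \<xi>" "c \<xi>"] by simp
  ultimately show "norm y \<le> sqrt (K / p \<xi>) + norm (c \<xi>)" unfolding y by linarith
qed


lemma ipL_tendsto_zero:
  fixes u :: "nat \<Rightarrow> 's \<Rightarrow> real^'n::finite"
  assumes "\<forall>\<xi>\<in>Xi. (\<lambda>k. u k \<xi>) \<longlonglongrightarrow> 0"
  shows "(\<lambda>k. ipL Xi p (u k) (u k)) \<longlonglongrightarrow> 0"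
proof -
  have "(\<lambda>k. ipL Xi p (u k) (u k)) \<longlonglongrightarrow> (\<Sum>\<xi>\<in>Xi. p \<xi> * (0 \<bullet> (0::real^'n)))"
    unfolding ipL_def using assms by (intro tendsto_sum tendsto_mult tendsto_const tendsto_inner) auto
  thus ?thesis by simp
qed

theorem corollary1:
  fixes Xi :: "(nat \<Rightarrow> 'c) set" and p :: "(nat \<Rightarrow> 'c) \<Rightarrow> real"
    and N :: nat and blk :: "'n::finite \<Rightarrow> nat"
    and C :: "(nat \<Rightarrow> 'c) \<Rightarrow> (real^'n) set"
    and F :: "real^'n \<Rightarrow> (nat \<Rightarrow> 'c) \<Rightarrow> real^'n"
    and r :: real
    and x w xh wh :: "nat \<Rightarrow> (nat \<Rightarrow> 'c) \<Rightarrow> real^'n"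
    and \<sigma>bar \<theta> :: real and \<sigma> \<tau> :: "nat \<Rightarrow> real"
  defines "PN \<equiv> oprojL Xi p (NA Xi blk)"
      and "PM \<equiv> oprojL Xi p (MA Xi p blk)"
  assumes Xi: "finite Xi" "Xi \<noteq> {}"
      and p: "\<forall>\<xi>\<in>Xi. p \<xi> > 0"
      and blk: "\<forall>i. blk i \<in> {1..N}"
      and C: "\<forall>\<xi>\<in>Xi. C \<xi> \<noteq> {} \<and> closed (C \<xi>) \<and> convex (C \<xi>)"
      and F: "\<forall>\<xi>\<in>Xi. continuous_on UNIV (\<lambda>u. F u \<xi>)
                 \<and> (\<forall>u v. (F u \<xi> - F v \<xi>) \<bullet> (u - v) \<ge> 0)"
      and r: "r > 0"
      and ext_sol: "\<exists>xs\<in>NA Xi blk. \<exists>ws\<in>MA Xi p blk.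
                 \<forall>\<xi>\<in>Xi. - F (xs \<xi>) \<xi> - ws \<xi> \<in> normal_cone (C \<xi>) (xs \<xi>)"
      and x0: "x 0 \<in> NA Xi blk" and w0: "w 0 \<in> MA Xi p blk"
      and \<sigma>bar: "0 < \<sigma>bar" "\<sigma>bar < 1"
      and \<theta>: "0 < \<theta>" "\<theta> < 1"
      and \<sigma>: "\<forall>k. 0 \<le> \<sigma> k \<and> \<sigma> k < \<sigma>bar"
      and hat_L: "\<forall>k. xh k \<in> Ln Xi \<and> wh k \<in> Ln Xi"
      and hat_incl: "\<forall>k. \<forall>\<xi>\<in>Xi.
                 r *\<^sub>R (x k \<xi> - xh k \<xi>) - w k \<xi> - F (wh k \<xi>) \<xi>
                   \<in> normal_cone (C \<xi>) (wh k \<xi>)"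
      and inexact: "\<forall>k. ipL Xi p (\<lambda>\<xi>. wh k \<xi> - xh k \<xi>) (\<lambda>\<xi>. wh k \<xi> - xh k \<xi>)
                 \<le> (\<sigma> k)\<^sup>2 *
                   (ipL Xi p (\<lambda>\<xi>. x k \<xi> - PN (xh k) \<xi> + PM (wh k) \<xi>)
                             (\<lambda>\<xi>. x k \<xi> - PN (xh k) \<xi> + PM (wh k) \<xi>)
                  + ipL Xi p (\<lambda>\<xi>. x k \<xi> - PN (wh k) \<xi> + PM (xh k) \<xi>)
                             (\<lambda>\<xi>. x k \<xi> - PN (wh k) \<xi> + PM (xh k) \<xi>))"
      and nostop: "\<forall>k. \<exists>\<xi>\<in>Xi. x k \<xi> - PN (wh k) \<xi> + PM (xh k) \<xi> \<noteq> 0"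
      and \<tau>: "\<forall>k. 1 - \<theta> \<le> \<tau> k \<and> \<tau> k \<le> 1 + \<theta>"
      and upd_x: "\<forall>k. x (Suc k) = (\<lambda>\<xi>. x k \<xi> - (\<tau> k *
                 (ipL Xi p (\<lambda>\<xi>. x k \<xi> - PN (xh k) \<xi> + PM (wh k) \<xi>)
                           (\<lambda>\<xi>. x k \<xi> - PN (wh k) \<xi> + PM (xh k) \<xi>)
                  / ipL Xi p (\<lambda>\<xi>. x k \<xi> - PN (xh k) \<xi> + PM (wh k) \<xi>)
                             (\<lambda>\<xi>. x k \<xi> - PN (xh k) \<xi> + PM (wh k) \<xi>)))
                 *\<^sub>R (x k \<xi> - PN (xh k) \<xi>))"
      and upd_w: "\<forall>k. w (Suc k) = (\<lambda>\<xi>. w k \<xi> + (\<tau> k *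
                 (ipL Xi p (\<lambda>\<xi>. x k \<xi> - PN (xh k) \<xi> + PM (wh k) \<xi>)
                           (\<lambda>\<xi>. x k \<xi> - PN (wh k) \<xi> + PM (xh k) \<xi>)
                  / ipL Xi p (\<lambda>\<xi>. x k \<xi> - PN (xh k) \<xi> + PM (wh k) \<xi>)
                             (\<lambda>\<xi>. x k \<xi> - PN (xh k) \<xi> + PM (wh k) \<xi>)) * r)
                 *\<^sub>R PM (wh k) \<xi>)"
  shows "\<exists>xs ws. (\<forall>\<xi>\<in>Xi. (\<lambda>k. x k \<xi>) \<longlonglongrightarrow> xs \<xi> \<and> (\<lambda>k. w k \<xi>) \<longlonglongrightarrow> ws \<xi>)
           \<and> xs \<in> NA Xi blk \<and> ws \<in> MA Xi p blk
           \<and> (\<forall>\<xi>\<in>Xi. - F (xs \<xi>) \<xi> - ws \<xi> \<in> normal_cone (C \<xi>) (xs \<xi>))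
           \<and> xs \<in> CC Xi C \<inter> NA Xi blk
           \<and> (\<lambda>\<xi>. - F (xs \<xi>) \<xi>) \<in> normal_coneL Xi p (CC Xi C \<inter> NA Xi blk) xs"
proof -
  note fin = Xi(1)
  have pos: "\<forall>\<xi>\<in>Xi. p \<xi> > 0" using p .
  have PNd: "\<And>y. y \<in> Ln Xi \<Longrightarrow> PN y \<in> NA Xi blk \<and> PM y \<in> MA Xi p blk \<and> (\<forall>\<xi>. PN y \<xi> + PM y \<xi> = y \<xi>)"
    unfolding PN_def PM_def by (rule PNd_lemma[OF fin pos])
  have Fm: "\<forall>\<xi>\<in>Xi. \<forall>u v. (F u \<xi> - F v \<xi>) \<bullet> (u - v) \<ge> 0" using F by blast
  have Fc: "\<forall>\<xi>\<in>Xi. continuous_on UNIV (\<lambda>u. F u \<xi>)" using F by blast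
  have xhL: "\<And>k. xh k \<in> Ln Xi" and whL: "\<And>k. wh k \<in> Ln Xi" using hat_L by auto
  have inv: "x k \<in> NA Xi blk \<and> w k \<in> MA Xi p blk" for k
  proof (induction k)
    case 0 show ?case using x0 w0 by simp
  next
    case (Suc k)
    hence xk: "x k \<in> NA Xi blk" and wk: "w k \<in> MA Xi p blk" by auto
    have PNxh: "PN (xh k) \<in> NA Xi blk" and PMwh: "PM (wh k) \<in> MA Xi p blk"
      using PNd[OF xhL[of k]] PNd[OF whL[of k]] by auto
    show ?case unfolding upd_x[rule_format] upd_w[rule_format]
      using NA_diff[OF xk NA_scale[OF NA_diff[OF xk PNxh]]] MA_add[OF wk MA_scale[OF PMwh]] by blast
  qed
  define A where "A k = ipL Xi p (\<lambda>\<xi>. x k \<xi> - PN (xh k) \<xi> + PM (wh k) \<xi>) (\<lambda>\<xi>. x k \<xi> - PN (xh k) \<xi> + PM (wh k) \<xi>)" for k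
  define B where "B k = ipL Xi p (\<lambda>\<xi>. x k \<xi> - PN (wh k) \<xi> + PM (xh k) \<xi>) (\<lambda>\<xi>. x k \<xi> - PN (wh k) \<xi> + PM (xh k) \<xi>)" for k
  define \<kappa> where "\<kappa> = (1 - \<theta>\<^sup>2) * ((1 - \<sigma>bar\<^sup>2) / 2)\<^sup>2"
  define Dist where "Dist xs ws k = ipL Xi p (\<lambda>\<xi>. x k \<xi> - xs \<xi>) (\<lambda>\<xi>. x k \<xi> - xs \<xi>)
      + ipL Xi p (\<lambda>\<xi>. w k \<xi> - ws \<xi>) (\<lambda>\<xi>. w k \<xi> - ws \<xi>) / r\<^sup>2" for xs ws k
  have \<kappa>pos: "\<kappa> > 0"
  proof -
    have "\<theta>\<^sup>2 < 1" using \<theta> by (simp add: power2_less_1_iff abs_less_iff)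
    moreover have "\<sigma>bar\<^sup>2 < 1" using \<sigma>bar by (simp add: power2_less_1_iff abs_less_iff)
    ultimately show ?thesis unfolding \<kappa>_def by simp
  qed
  have A0: "A k \<ge> 0" for k unfolding A_def by (rule ipL_nonneg[OF pos])
  have B0: "B k \<ge> 0" for k unfolding B_def by (rule ipL_nonneg[OF pos])
  have Dnn: "Dist xs ws k \<ge> 0" for xs ws k
    unfolding Dist_def by (intro add_nonneg_nonneg divide_nonneg_pos ipL_nonneg[OF pos]) (use r in simp)
  have fejer: "Dist xs ws (Suc k) \<le> Dist xs ws k - \<kappa> * (A k + B k)"
    if xs: "xs \<in> NA Xi blk" and ws: "ws \<in> MA Xi p blk"
      and sol: "\<forall>\<xi>\<in>Xi. - F (xs \<xi>) \<xi> - ws \<xi> \<in> normal_cone (C \<xi>) (xs \<xi>)" for xs ws k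
  proof -
    have incl: "\<forall>\<xi>\<in>Xi. r *\<^sub>R (x k \<xi> - xh k \<xi>) - w k \<xi> - F (wh k \<xi>) \<xi> \<in> normal_cone (C \<xi>) (wh k \<xi>)"
      using hat_incl by blast
    have s: "0 \<le> \<sigma> k" "\<sigma> k < \<sigma>bar" using \<sigma> by auto
    have t: "1 - \<theta> \<le> \<tau> k" "\<tau> k \<le> 1 + \<theta>" using \<tau> by auto
    have bnz: "\<exists>\<xi>\<in>Xi. x k \<xi> - PN (wh k) \<xi> + PM (xh k) \<xi> \<noteq> 0" using nostop by blast
    note st = fejer_step[OF fin pos PNd conjunct1[OF inv[of k]] conjunct2[OF inv[of k]] xhL whL xs ws sol Fm incl r
        inexact[rule_format, of k] s \<sigma>bar(2) bnz t \<theta> upd_x[rule_format, of k] upd_w[rule_format, of k]]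
    show ?thesis unfolding Dist_def A_def B_def \<kappa>_def by (rule st)
  qed
  obtain xs0 ws0 where xs0: "xs0 \<in> NA Xi blk" and ws0: "ws0 \<in> MA Xi p blk"
    and sol0: "\<forall>\<xi>\<in>Xi. - F (xs0 \<xi>) \<xi> - ws0 \<xi> \<in> normal_cone (C \<xi>) (xs0 \<xi>)"
    using ext_sol by blast
  define D0 where "D0 = Dist xs0 ws0"
  have D0dec: "D0 (Suc k) \<le> D0 k - \<kappa> * (A k + B k)" for k
    unfolding D0_def by (rule fejer[OF xs0 ws0 sol0])
  have D0dec': "D0 (Suc k) \<le> D0 k" for k
    using D0dec[of k] \<kappa>pos A0[of k] B0[of k] by (smt (verit) mult_nonneg_nonneg)
  have "decseq D0" by (rule decseq_SucI) (rule D0dec')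
  have D0nn: "\<forall>i. 0 \<le> D0 i" unfolding D0_def using Dnn by blast
  obtain L where L: "D0 \<longlonglongrightarrow> L" by (rule decseq_convergent[OF \<open>decseq D0\<close> D0nn])
  have "(\<lambda>k. D0 k - D0 (Suc k)) \<longlonglongrightarrow> L - L" by (intro tendsto_diff L LIMSEQ_Suc)
  hence dlim: "(\<lambda>k. D0 k - D0 (Suc k)) \<longlonglongrightarrow> 0" by simp
  have "(\<lambda>k. \<kappa> * (A k + B k)) \<longlonglongrightarrow> 0"
    by (rule tendsto_sandwich[OF _ _ tendsto_const dlim])
      (use D0dec A0 B0 \<kappa>pos in \<open>auto intro!: always_eventually simp: algebra_simps\<close>)
  hence "(\<lambda>k. (1 / \<kappa>) * (\<kappa> * (A k + B k))) \<longlonglongrightarrow> (1 / \<kappa>) * 0" by (intro tendsto_mult tendsto_const)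
  hence ABlim: "(\<lambda>k. A k + B k) \<longlonglongrightarrow> 0" using \<kappa>pos by simp
  have Alim: "A \<longlonglongrightarrow> 0"
    by (rule tendsto_sandwich[OF _ _ tendsto_const ABlim]) (use A0 B0 in \<open>auto intro!: always_eventually\<close>)
  have Blim: "B \<longlonglongrightarrow> 0"
    by (rule tendsto_sandwich[OF _ _ tendsto_const ABlim]) (use A0 B0 in \<open>auto intro!: always_eventually\<close>)
  define dx where "dx k = (\<lambda>\<xi>. x k \<xi> - PN (xh k) \<xi>)" for k
  define db where "db k = (\<lambda>\<xi>. x k \<xi> - PN (wh k) \<xi>)" for k
  have dxN: "dx k \<in> NA Xi blk" for k unfolding dx_def using inv[of k] PNd[OF xhL[of k]] NA_diff by blast
  have dbN: "db k \<in> NA Xi blk" for k unfolding db_def using inv[of k] PNd[OF whL[of k]] NA_diff by blast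
  have PMwh: "PM (wh k) \<in> MA Xi p blk" and PMxh: "PM (xh k) \<in> MA Xi p blk" for k
    using PNd[OF xhL[of k]] PNd[OF whL[of k]] by auto
  have Asplit: "A k = ipL Xi p (dx k) (dx k) + ipL Xi p (PM (wh k)) (PM (wh k))" for k
  proof -
    have "A k = ipL Xi p (\<lambda>\<xi>. dx k \<xi> + PM (wh k) \<xi>) (\<lambda>\<xi>. dx k \<xi> + PM (wh k) \<xi>)"
      unfolding A_def dx_def by simp
    thus ?thesis using ipL_orth_split[OF NA_MA_orth[OF dxN PMwh]] by simp
  qed
  have Bsplit: "B k = ipL Xi p (db k) (db k) + ipL Xi p (PM (xh k)) (PM (xh k))" for k
  proof -
    have "B k = ipL Xi p (\<lambda>\<xi>. db k \<xi> + PM (xh k) \<xi>) (\<lambda>\<xi>. db k \<xi> + PM (xh k) \<xi>)"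
      unfolding B_def db_def by simp
    thus ?thesis using ipL_orth_split[OF NA_MA_orth[OF dbN PMxh]] by simp
  qed
  have sq0: "(\<lambda>k. ipL Xi p (u k) (u k)) \<longlonglongrightarrow> 0"
    if "\<And>k. ipL Xi p (u k) (u k) \<le> E k" "E \<longlonglongrightarrow> 0" for u and E :: "nat \<Rightarrow> real"
    by (rule tendsto_sandwich[OF _ _ tendsto_const that(2)])
      (use that(1) ipL_nonneg[OF pos] in \<open>auto intro!: always_eventually\<close>)
  have l_dx: "(\<lambda>k. ipL Xi p (dx k) (dx k)) \<longlonglongrightarrow> 0"
    by (rule sq0[OF _ Alim]) (use Asplit ipL_nonneg[OF pos] in \<open>smt (verit)\<close>)
  have l_PMwh: "(\<lambda>k. ipL Xi p (PM (wh k)) (PM (wh k))) \<longlonglongrightarrow> 0"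
    by (rule sq0[OF _ Alim]) (use Asplit ipL_nonneg[OF pos] in \<open>smt (verit)\<close>)
  have l_db: "(\<lambda>k. ipL Xi p (db k) (db k)) \<longlonglongrightarrow> 0"
    by (rule sq0[OF _ Blim]) (use Bsplit ipL_nonneg[OF pos] in \<open>smt (verit)\<close>)
  have l_PMxh: "(\<lambda>k. ipL Xi p (PM (xh k)) (PM (xh k))) \<longlonglongrightarrow> 0"
    by (rule sq0[OF _ Blim]) (use Bsplit ipL_nonneg[OF pos] in \<open>smt (verit)\<close>)
  have whx: "(\<lambda>k. wh k \<xi> - x k \<xi>) \<longlonglongrightarrow> 0" if \<xi>: "\<xi> \<in> Xi" for \<xi>
  proof -
    have "(\<lambda>k. PM (wh k) \<xi> - db k \<xi>) \<longlonglongrightarrow> 0 - 0"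
      by (intro tendsto_diff ipL_tendsto_point[OF fin pos \<xi>] l_PMwh l_db)
    moreover have "PM (wh k) \<xi> - db k \<xi> = wh k \<xi> - x k \<xi>" for k
      using PNd[OF whL[of k]] unfolding db_def by (metis add_diff_cancel_left' diff_diff_eq2 add.commute)
    ultimately show ?thesis by simp
  qed
  have xhx: "(\<lambda>k. x k \<xi> - xh k \<xi>) \<longlonglongrightarrow> 0" if \<xi>: "\<xi> \<in> Xi" for \<xi>
  proof -
    have "(\<lambda>k. dx k \<xi> - PM (xh k) \<xi>) \<longlonglongrightarrow> 0 - 0"
      by (intro tendsto_diff ipL_tendsto_point[OF fin pos \<xi>] l_PMxh l_dx)
    moreover have "dx k \<xi> - PM (xh k) \<xi> = x k \<xi> - xh k \<xi>" for k
      using PNd[OF xhL[of k]] unfolding dx_def by (metis diff_diff_eq add.commute)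
    ultimately show ?thesis by simp
  qed
  have bnd: "\<forall>\<xi>\<in>Xi. bounded (range (\<lambda>k. (x k \<xi>, w k \<xi>)))"
  proof
    fix \<xi> assume \<xi>: "\<xi> \<in> Xi"
    have D0le: "D0 k \<le> D0 0" for k
      using \<open>decseq D0\<close> unfolding decseq_def by simp
    have r2: "r\<^sup>2 > 0" using r by simp
    have bx: "bounded (range (\<lambda>k. x k \<xi>))"
    proof (rule bound_from_ipL[OF fin pos \<xi>, of _ xs0 "D0 0"], rule allI)
      fix k
      have "ipL Xi p (\<lambda>\<xi>. w k \<xi> - ws0 \<xi>) (\<lambda>\<xi>. w k \<xi> - ws0 \<xi>) / r\<^sup>2 \<ge> 0"
        by (intro divide_nonneg_pos ipL_nonneg[OF pos] r2)
      thus "ipL Xi p (\<lambda>\<xi>. x k \<xi> - xs0 \<xi>) (\<lambda>\<xi>. x k \<xi> - xs0 \<xi>) \<le> D0 0"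
        using D0le[of k] unfolding D0_def Dist_def by linarith
    qed
    have bw: "bounded (range (\<lambda>k. w k \<xi>))"
    proof (rule bound_from_ipL[OF fin pos \<xi>, of _ ws0 "r\<^sup>2 * D0 0"], rule allI)
      fix k
      have "ipL Xi p (\<lambda>\<xi>. x k \<xi> - xs0 \<xi>) (\<lambda>\<xi>. x k \<xi> - xs0 \<xi>) \<ge> 0"
        by (rule ipL_nonneg[OF pos])
      hence "ipL Xi p (\<lambda>\<xi>. w k \<xi> - ws0 \<xi>) (\<lambda>\<xi>. w k \<xi> - ws0 \<xi>) / r\<^sup>2 \<le> D0 0"
        using D0le[of k] unfolding D0_def Dist_def by linarith
      thus "ipL Xi p (\<lambda>\<xi>. w k \<xi> - ws0 \<xi>) (\<lambda>\<xi>. w k \<xi> - ws0 \<xi>) \<le> r\<^sup>2 * D0 0"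
        using r2 by (simp add: divide_le_eq mult.commute)
    qed
    have "range (\<lambda>k. (x k \<xi>, w k \<xi>)) \<subseteq> range (\<lambda>k. x k \<xi>) \<times> range (\<lambda>k. w k \<xi>)" by auto
    thus "bounded (range (\<lambda>k. (x k \<xi>, w k \<xi>)))"
      using bounded_Times[OF bx bw] bounded_subset by blast
  qed
  obtain h where h: "strict_mono h" and hl: "\<forall>\<xi>\<in>Xi. \<exists>l. (\<lambda>j. (x (h j) \<xi>, w (h j) \<xi>)) \<longlonglongrightarrow> l"
    using common_subseq[OF fin bnd] by blast
  then obtain Lf where Lf: "\<forall>\<xi>\<in>Xi. (\<lambda>j. (x (h j) \<xi>, w (h j) \<xi>)) \<longlonglongrightarrow> Lf \<xi>" by metis
  define xb where "xb \<xi> = (if \<xi> \<in> Xi then fst (Lf \<xi>) else 0)" for \<xi>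
  define wb where "wb \<xi> = (if \<xi> \<in> Xi then snd (Lf \<xi>) else 0)" for \<xi>
  have xlim: "(\<lambda>j. x (h j) \<xi>) \<longlonglongrightarrow> xb \<xi>" if "\<xi> \<in> Xi" for \<xi>
    using tendsto_fst[OF Lf[rule_format, OF that]] that unfolding xb_def by simp
  have wlim: "(\<lambda>j. w (h j) \<xi>) \<longlonglongrightarrow> wb \<xi>" if "\<xi> \<in> Xi" for \<xi>
    using tendsto_snd[OF Lf[rule_format, OF that]] that unfolding wb_def by simp
  have xbN: "xb \<in> NA Xi blk"
  proof (rule NA_I)
    show "xb \<in> Ln Xi" unfolding Ln_def xb_def by simp
    fix \<xi> \<xi>' i assume pr: "\<xi> \<in> Xi" "\<xi>' \<in> Xi" "\<forall>t\<in>{1..<blk i}. \<xi> t = \<xi>' t"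
    have "(\<lambda>j. x (h j) \<xi> $ i) \<longlonglongrightarrow> xb \<xi> $ i" by (intro tendsto_vec_nth xlim pr(1))
    moreover have "(\<lambda>j. x (h j) \<xi> $ i) = (\<lambda>j. x (h j) \<xi>' $ i)"
      using NA_D[OF conjunct1[OF inv] pr] by simp
    moreover have "(\<lambda>j. x (h j) \<xi>' $ i) \<longlonglongrightarrow> xb \<xi>' $ i" by (intro tendsto_vec_nth xlim pr(2))
    ultimately show "xb \<xi> $ i = xb \<xi>' $ i" using LIMSEQ_unique by metis
  qed
  have wbM: "wb \<in> MA Xi p blk"
    unfolding MA_def
  proof (rule CollectI, rule conjI)
    show "wb \<in> Ln Xi" unfolding Ln_def wb_def by simp
    show "\<forall>z\<in>NA Xi blk. ipL Xi p z wb = 0"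
    proof
      fix z assume z: "z \<in> NA Xi blk"
      have "(\<lambda>j. ipL Xi p z (w (h j))) \<longlonglongrightarrow> ipL Xi p z wb"
        by (rule ipL_tendsto) (use wlim in auto)
      moreover have "(\<lambda>j. ipL Xi p z (w (h j))) = (\<lambda>j. 0)"
        using NA_MA_orth[OF z conjunct2[OF inv]] by simp
      ultimately show "ipL Xi p z wb = 0" using LIMSEQ_unique tendsto_const by metis
    qed
  qed
  have solb: "\<forall>\<xi>\<in>Xi. - F (xb \<xi>) \<xi> - wb \<xi> \<in> normal_cone (C \<xi>) (xb \<xi>)"
  proof
    fix \<xi> assume \<xi>: "\<xi> \<in> Xi"
    have Ul: "(\<lambda>j. wh (h j) \<xi>) \<longlonglongrightarrow> xb \<xi>"
    proof -
      have "(\<lambda>j. (wh (h j) \<xi> - x (h j) \<xi>) + x (h j) \<xi>) \<longlonglongrightarrow> 0 + xb \<xi>"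
        using LIMSEQ_subseq_LIMSEQ[OF whx[OF \<xi>] h] xlim[OF \<xi>] by (intro tendsto_add) (auto simp: o_def)
      thus ?thesis by simp
    qed
    have Fl: "(\<lambda>j. F (wh (h j) \<xi>) \<xi>) \<longlonglongrightarrow> F (xb \<xi>) \<xi>"
      by (rule continuous_on_tendsto_compose[OF Fc[rule_format, OF \<xi>] Ul]) auto
    have "(\<lambda>j. r *\<^sub>R (x (h j) \<xi> - xh (h j) \<xi>) - w (h j) \<xi> - F (wh (h j) \<xi>) \<xi>)
        \<longlonglongrightarrow> r *\<^sub>R 0 - wb \<xi> - F (xb \<xi>) \<xi>"
      using LIMSEQ_subseq_LIMSEQ[OF xhx[OF \<xi>] h] wlim[OF \<xi>] Fl
      by (intro tendsto_diff tendsto_scaleR tendsto_const) (auto simp: o_def)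
    moreover have eqn: "r *\<^sub>R 0 - wb \<xi> - F (xb \<xi>) \<xi> = - F (xb \<xi>) \<xi> - wb \<xi>" by (simp add: algebra_simps)
    ultimately have nl: "(\<lambda>j. r *\<^sub>R (x (h j) \<xi> - xh (h j) \<xi>) - w (h j) \<xi> - F (wh (h j) \<xi>) \<xi>)
        \<longlonglongrightarrow> - F (xb \<xi>) \<xi> - wb \<xi>" by (simp only: eqn)
    show "- F (xb \<xi>) \<xi> - wb \<xi> \<in> normal_cone (C \<xi>) (xb \<xi>)"
      by (rule normal_cone_limit[OF _ _ Ul nl]) (use C \<xi> hat_incl in auto)
  qed
  define D1 where "D1 = Dist xb wb"
  have D1dec: "\<forall>k. D1 (Suc k) \<le> D1 k"
  proof
    fix k show "D1 (Suc k) \<le> D1 k"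
      using fejer[OF xbN wbM solb, of k] \<kappa>pos A0[of k] B0[of k] unfolding D1_def
      by (smt (verit) mult_nonneg_nonneg)
  qed
  have D1sub: "(\<lambda>j. D1 (h j)) \<longlonglongrightarrow> 0"
  proof -
    have a: "(\<lambda>j. ipL Xi p (\<lambda>\<xi>. x (h j) \<xi> - xb \<xi>) (\<lambda>\<xi>. x (h j) \<xi> - xb \<xi>)) \<longlonglongrightarrow> 0"
      by (rule ipL_tendsto_zero) (use xlim in \<open>auto intro: LIM_zero\<close>)
    have b: "(\<lambda>j. ipL Xi p (\<lambda>\<xi>. w (h j) \<xi> - wb \<xi>) (\<lambda>\<xi>. w (h j) \<xi> - wb \<xi>)) \<longlonglongrightarrow> 0"
      by (rule ipL_tendsto_zero) (use wlim in \<open>auto intro: LIM_zero\<close>)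
    have "(\<lambda>j. D1 (h j)) \<longlonglongrightarrow> 0 + 0 / r\<^sup>2"
      unfolding D1_def Dist_def using a b by (intro tendsto_add tendsto_divide tendsto_const) (use r in auto)
    thus ?thesis by simp
  qed
  have D1lim: "D1 \<longlonglongrightarrow> 0"
    by (rule dec_subseq_zero[OF D1dec _ h D1sub]) (simp add: D1_def Dnn)
  have r2: "r\<^sup>2 > 0" using r by simp
  have xconv: "(\<lambda>k. x k \<xi>) \<longlonglongrightarrow> xb \<xi>" if \<xi>: "\<xi> \<in> Xi" for \<xi>
  proof -
    have "(\<lambda>k. ipL Xi p (\<lambda>\<xi>. x k \<xi> - xb \<xi>) (\<lambda>\<xi>. x k \<xi> - xb \<xi>)) \<longlonglongrightarrow> 0"
    proof (rule sq0[OF _ D1lim])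
      fix k
      have "ipL Xi p (\<lambda>\<xi>. w k \<xi> - wb \<xi>) (\<lambda>\<xi>. w k \<xi> - wb \<xi>) / r\<^sup>2 \<ge> 0"
        by (intro divide_nonneg_pos ipL_nonneg[OF pos] r2)
      thus "ipL Xi p (\<lambda>\<xi>. x k \<xi> - xb \<xi>) (\<lambda>\<xi>. x k \<xi> - xb \<xi>) \<le> D1 k"
        unfolding D1_def Dist_def by linarith
    qed
    from ipL_tendsto_point[OF fin pos \<xi> this] show ?thesis by (simp add: LIM_zero_cancel)
  qed
  have wconv: "(\<lambda>k. w k \<xi>) \<longlonglongrightarrow> wb \<xi>" if \<xi>: "\<xi> \<in> Xi" for \<xi>
  proof -
    have "(\<lambda>k. r\<^sup>2 * D1 k) \<longlonglongrightarrow> r\<^sup>2 * 0" by (intro tendsto_mult tendsto_const D1lim)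
    hence E: "(\<lambda>k. r\<^sup>2 * D1 k) \<longlonglongrightarrow> 0" by simp
    have "(\<lambda>k. ipL Xi p (\<lambda>\<xi>. w k \<xi> - wb \<xi>) (\<lambda>\<xi>. w k \<xi> - wb \<xi>)) \<longlonglongrightarrow> 0"
    proof (rule sq0[OF _ E])
      fix k
      have "ipL Xi p (\<lambda>\<xi>. x k \<xi> - xb \<xi>) (\<lambda>\<xi>. x k \<xi> - xb \<xi>) \<ge> 0"
        by (rule ipL_nonneg[OF pos])
      hence "ipL Xi p (\<lambda>\<xi>. w k \<xi> - wb \<xi>) (\<lambda>\<xi>. w k \<xi> - wb \<xi>) / r\<^sup>2 \<le> D1 k"
        unfolding D1_def Dist_def by linarith
      thus "ipL Xi p (\<lambda>\<xi>. w k \<xi> - wb \<xi>) (\<lambda>\<xi>. w k \<xi> - wb \<xi>) \<le> r\<^sup>2 * D1 k"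
        using r2 by (simp add: divide_le_eq mult.commute)
    qed
    from ipL_tendsto_point[OF fin pos \<xi> this] show ?thesis by (simp add: LIM_zero_cancel)
  qed
  have xbC: "xb \<in> CC Xi C"
    unfolding CC_def using solb xbN NA_L unfolding normal_cone_def by blast
  have basic: "(\<lambda>\<xi>. - F (xb \<xi>) \<xi>) \<in> normal_coneL Xi p (CC Xi C \<inter> NA Xi blk) xb"
    unfolding normal_coneL_def
  proof (rule CollectI, rule conjI)
    show "xb \<in> CC Xi C \<inter> NA Xi blk" using xbC xbN by blast
    show "\<forall>y\<in>CC Xi C \<inter> NA Xi blk. ipL Xi p (\<lambda>\<xi>. - F (xb \<xi>) \<xi>) (\<lambda>\<xi>. y \<xi> - xb \<xi>) \<le> 0"
    proof
      fix y assume y: "y \<in> CC Xi C \<inter> NA Xi blk"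
      have yN: "(\<lambda>\<xi>. y \<xi> - xb \<xi>) \<in> NA Xi blk" using y xbN NA_diff by blast
      have "ipL Xi p (\<lambda>\<xi>. - F (xb \<xi>) \<xi>) (\<lambda>\<xi>. y \<xi> - xb \<xi>)
          = ipL Xi p (\<lambda>\<xi>. (- F (xb \<xi>) \<xi> - wb \<xi>) + wb \<xi>) (\<lambda>\<xi>. y \<xi> - xb \<xi>)" by simp
      also have "\<dots> = ipL Xi p (\<lambda>\<xi>. - F (xb \<xi>) \<xi> - wb \<xi>) (\<lambda>\<xi>. y \<xi> - xb \<xi>)"
        using ipL_add_left[of Xi p "\<lambda>\<xi>. - F (xb \<xi>) \<xi> - wb \<xi>" wb "\<lambda>\<xi>. y \<xi> - xb \<xi>"] MA_NA_orth[OF wbM yN]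
        by simp
      also have "\<dots> \<le> 0"
        unfolding ipL_def
      proof (rule sum_nonpos)
        fix \<xi> assume \<xi>: "\<xi> \<in> Xi"
        have "y \<xi> \<in> C \<xi>" using y \<xi> unfolding CC_def by blast
        hence "(- F (xb \<xi>) \<xi> - wb \<xi>) \<bullet> (y \<xi> - xb \<xi>) \<le> 0"
          using solb \<xi> unfolding normal_cone_def by blast
        moreover have "p \<xi> > 0" using pos \<xi> by blast
        ultimately show "p \<xi> * ((- F (xb \<xi>) \<xi> - wb \<xi>) \<bullet> (y \<xi> - xb \<xi>)) \<le> 0"
          by (simp add: mult_nonneg_nonpos)
      qed
      finally show "ipL Xi p (\<lambda>\<xi>. - F (xb \<xi>) \<xi>) (\<lambda>\<xi>. y \<xi> - xb \<xi>) \<le> 0" .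
    qed
  qed
  show ?thesis
    by (rule exI[of _ xb], rule exI[of _ wb]) (use xconv wconv xbN wbM solb xbC basic in blast)
qed

end
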